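(* Let $\Bbbk$ be a field of characteristic $0$ and let $Q_1$ be the quiver with vertices $\{1,2\}$ and a single arrow $t:1\to2$. The zero double bracket is the unique $B$-linear double quasi-Poisson bracket on the path algebra $\Bbbk Q_1$, where $B=\Bbbk e_1\oplus\Bbbk e_2$.
   Context: The path algebra $\Bbbk Q_1$ is generated by $e_1,e_2,t$ with $e_ie_j=\delta_{ij}e_i$, $e_1+e_2=1$, $t=e_1te_2$. $\otimes=\otimes_\Bbbk$; Sweedler notation $d=d'\otimes d''$; outer structure $x(d'\otimes d'')y=xd'\otimes d''y$, inner structure $x*(d'\otimes d'')*y=d'y\otimes xd''$. A $B$-linear double bracket is a $\Bbbk$-bilinear map $A\times A\to A\otimes A$ vanishing when an argument lies in $B$, with $\{\!\{a,b\}\!\}=-\{\!\{b,a\}\!\}''\otimes\{\!\{b,a\}\!\}'$ and $\{\!\{a,bc\}\!\}=\{\!\{a,b\}\!\}c+b\{\!\{a,c\}\!\}$. Triple bracket: $\{\!\{a,b,c\}\!\}=\{\!\{a,\{\!\{b,c\}\!\}'\}\!\}\otimes\{\!\{b,c\}\!\}''+\tau\{\!\{b,\{\!\{c,a\}\!\}'\}\!\}\otimes\{\!\{c,a\}\!\}''+\tau^2\{\!\{c,\{\!\{a,b\}\!\}'\}\!\}\otimes\{\!\{a,b\}\!\}''$, $\tau(x_1\otimes x_2\otimes x_3)=x_3\otimes x_1\otimes x_2$. Quasi-Poisson: $\{\!\{a,b,c\}\!\}=\frac14\sum_{s=1,2}(ce_sa\otimes e_sb\otimes e_s-ce_sa\otimes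 e_s\otimes be_s-ce_s\otimes ae_sb\otimes e_s+ce_s\otimes ae_s\otimes be_s-e_sa\otimes e_sb\otimes e_sc+e_sa\otimes e_s\otimes be_sc+e_s\otimes ae_sb\otimes e_sc-e_s\otimes ae_s\otimes be_sc)$ for all $a,b,c$. *)

theory Defs
  imports Main
begin

text \<open>The path algebra kQ1 with k-basis e1, e2, t (t = e1 t e2). Elements of kQ1 are
  coefficient functions on the basis; A (x) A and A (x) A (x) A are coefficient
  functions on pairs / triples of basis elements.\<close>

datatype pb = E1 | E2 | T

lemma UNIV_pb: "(UNIV :: pb set) = {E1, E2, T}"
  using pb.exhaust by auto

instance pb :: finite
  by standard (simp add: UNIV_pb)

type_synonym 'k alg = "pb \<Rightarrow> 'k"
type_synonym 'k ten2 = "pb \<Rightarrow> pb \<Rightarrow> 'k"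
type_synonym 'k ten3 = "pb \<Rightarrow> pb \<Rightarrow> pb \<Rightarrow> 'k"

definition bv :: "pb \<Rightarrow> 'k::field alg" where
  "bv p = (\<lambda>r. if r = p then 1 else 0)"

fun bmul :: "pb \<Rightarrow> pb \<Rightarrow> pb option" where
  "bmul E1 E1 = Some E1"
| "bmul E2 E2 = Some E2"
| "bmul E1 T = Some T"
| "bmul T E2 = Some T"
| "bmul _ _ = None"

definition amul :: "'k::field alg \<Rightarrow> 'k alg \<Rightarrow> 'k alg" where
  "amul x y = (\<lambda>r. \<Sum>p\<in>UNIV. \<Sum>q\<in>UNIV. if bmul p q = Some r then x p * y q else 0)"

definition in_B :: "'k::field alg \<Rightarrow> bool" where
  "in_B x \<longleftrightarrow> x T = 0"

text \<open>Outer bimodule structure: x (d' (x) d'') = x d' (x) d'' and (d' (x) d'') y = d' (x) d'' y.\<close>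
definition omul_left :: "'k::field alg \<Rightarrow> 'k ten2 \<Rightarrow> 'k ten2" where
  "omul_left x d = (\<lambda>i j. \<Sum>p\<in>UNIV. amul x (bv p) i * d p j)"

definition omul_right :: "'k::field ten2 \<Rightarrow> 'k alg \<Rightarrow> 'k ten2" where
  "omul_right d y = (\<lambda>i j. \<Sum>q\<in>UNIV. d i q * amul (bv q) y j)"

definition B_linear_double_bracket :: "('k::field alg \<Rightarrow> 'k alg \<Rightarrow> 'k ten2) \<Rightarrow> bool" where
  "B_linear_double_bracket br \<longleftrightarrow>
     (\<forall>x y z. br (\<lambda>p. x p + y p) z = (\<lambda>i j. br x z i j + br y z i j)) \<and>
     (\<forall>c x z. br (\<lambda>p. c * x p) z = (\<lambda>i j. c * br x z i j)) \<and>
     (\<forall>x y z. br z (\<lambda>p. x p + y p) = (\<lambda>i j. br z x i j + br z y i j)) \<and>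
     (\<forall>c x z. br z (\<lambda>p. c * x p) = (\<lambda>i j. c * br z x i j)) \<and>
     (\<forall>a b. in_B b \<longrightarrow> br a b = (\<lambda>i j. 0) \<and> br b a = (\<lambda>i j. 0)) \<and>
     (\<forall>a b. br a b = (\<lambda>i j. - br b a j i)) \<and>
     (\<forall>a b c. br a (amul b c) = (\<lambda>i j. omul_right (br a b) c i j + omul_left b (br a c) i j))"

text \<open>{{a, d'}} (x) d'' extended linearly in d.\<close>
definition brL :: "('k::field alg \<Rightarrow> 'k alg \<Rightarrow> 'k ten2) \<Rightarrow> 'k alg \<Rightarrow> 'k ten2 \<Rightarrow> 'k ten3" where
  "brL br a d = (\<lambda>i j k. \<Sum>p\<in>UNIV. d p k * br a (bv p) i j)"

definition tau :: "'k ten3 \<Rightarrow> 'k ten3" where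
  "tau D = (\<lambda>i j k. D j k i)"

definition triple_bracket :: "('k::field alg \<Rightarrow> 'k alg \<Rightarrow> 'k ten2) \<Rightarrow> 'k alg \<Rightarrow> 'k alg \<Rightarrow> 'k alg \<Rightarrow> 'k ten3" where
  "triple_bracket br a b c = (\<lambda>i j k.
      brL br a (br b c) i j k + tau (brL br b (br c a)) i j k + tau (tau (brL br c (br a b))) i j k)"

definition tens3 :: "'k::field alg \<Rightarrow> 'k alg \<Rightarrow> 'k alg \<Rightarrow> 'k ten3" where
  "tens3 x y z = (\<lambda>i j k. x i * y j * z k)"

definition qP_rhs :: "'k::field alg \<Rightarrow> 'k alg \<Rightarrow> 'k alg \<Rightarrow> 'k ten3" where
  "qP_rhs a b c = (\<lambda>i j k. (1/4) * (\<Sum>s\<in>{E1, E2}. let e = bv s in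
       tens3 (amul (amul c e) a) (amul e b) e i j k
     - tens3 (amul (amul c e) a) e (amul b e) i j k
     - tens3 (amul c e) (amul (amul a e) b) e i j k
     + tens3 (amul c e) (amul a e) (amul b e) i j k
     - tens3 (amul e a) (amul e b) (amul e c) i j k
     + tens3 (amul e a) e (amul (amul b e) c) i j k
     + tens3 e (amul (amul a e) b) (amul e c) i j k
     - tens3 e (amul a e) (amul (amul b e) c) i j k))"

definition quasi_Poisson :: "('k::field alg \<Rightarrow> 'k alg \<Rightarrow> 'k ten2) \<Rightarrow> bool" where
  "quasi_Poisson br \<longleftrightarrow> (\<forall>a b c. triple_bracket br a b c = qP_rhs a b c)"

end

theory Submission
  imports Defs
begin

lemma amul_eval: "amul x (y::'k::field alg) = (\<lambda>r. case r of E1 \<Rightarrow> x E1 * y E1 | E2 \<Rightarrow> x E2 * y E2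
   | T \<Rightarrow> x E1 * y T + x T * y E2)"
  unfolding amul_def by (rule ext) (simp add: UNIV_pb split: pb.splits)

lemma bv_eval: "bv p = (\<lambda>r. if r = p then 1 else 0)" by (simp add: bv_def)

lemma qP_pt: "qP_rhs a b (c :: 'k::field alg) i j k = 0"
    unfolding qP_rhs_def tens3_def Let_def
    by (cases i; cases j; cases k) (simp_all add: amul_eval bv_def)

lemma qP_zero: "qP_rhs a b (c :: 'k::field alg) = (\<lambda>i j k. 0)"
  by (intro ext) (rule qP_pt)

lemma bvT_T: "amul (bv E1) (bv T) = (bv T :: 'k::field alg)"
  "amul (bv T) (bv E2) = (bv T :: 'k::field alg)"
  unfolding amul_def bv_def by (rule ext, simp add: UNIV_pb)+

lemma inB: "in_B (bv E1)" "in_B (bv E2)"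
  unfolding in_B_def bv_def by auto

lemma negself: "(x::'k::field_char_0) = - x \<longleftrightarrow> x = 0"
proof
  assume h: "x = - x"
  have "2 * x = x + x" by (rule mult_2)
  also have "\<dots> = x + - x" using h by (rule arg_cong)
  also have "\<dots> = 0" by (rule add.right_inverse)
  finally have "2 * x = 0" .
  then show "x = 0" by simp
qed simp

theorem lemma4p3:
  fixes br :: "(pb \<Rightarrow> 'k::field_char_0) \<Rightarrow> (pb \<Rightarrow> 'k) \<Rightarrow> (pb \<Rightarrow> pb \<Rightarrow> 'k)"
  shows "(B_linear_double_bracket br \<and> quasi_Poisson br) \<longleftrightarrow> br = (\<lambda>a b i j. 0)"
proof
  assume "br = (\<lambda>a b i j. 0)"
  then show "B_linear_double_bracket br \<and> quasi_Poisson br"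
  proof -
    assume z: "br = (\<lambda>a b i j. 0)"
    have "B_linear_double_bracket (\<lambda>(a::'k alg) (b::'k alg) (i::pb) (j::pb). 0::'k)"
      unfolding B_linear_double_bracket_def omul_left_def omul_right_def by simp
    moreover have "quasi_Poisson (\<lambda>(a::'k alg) (b::'k alg) (i::pb) (j::pb). 0::'k)"
      unfolding quasi_Poisson_def
    proof (intro allI)
      fix a b c :: "'k alg"
      show "triple_bracket (\<lambda>(a::'k alg) (b::'k alg) (i::pb) (j::pb). 0::'k) a b c = qP_rhs a b c"
        unfolding qP_zero triple_bracket_def brL_def tau_def by simp
    qed
    ultimately show ?thesis using z by simp
  qed
next
  assume "B_linear_double_bracket br \<and> quasi_Poisson br"
  then have B: "B_linear_double_bracket br" by simp
  note Bd = B[unfolded B_linear_double_bracket_def]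
  have c1: "\<forall>x y z. br (\<lambda>p. x p + y p) z = (\<lambda>i j. br x z i j + br y z i j)"
    using Bd by (rule conjunct1)
  have c2: "\<forall>c x z. br (\<lambda>p. c * x p) z = (\<lambda>i j. c * br x z i j)"
    using Bd by (rule conjunct2[THEN conjunct1])
  have c3: "\<forall>x y z. br z (\<lambda>p. x p + y p) = (\<lambda>i j. br z x i j + br z y i j)"
    using Bd by (rule conjunct2[THEN conjunct2, THEN conjunct1])
  have c4: "\<forall>c x z. br z (\<lambda>p. c * x p) = (\<lambda>i j. c * br z x i j)"
    using Bd by (rule conjunct2[THEN conjunct2, THEN conjunct2, THEN conjunct1])
  have c5: "\<forall>a b. in_B b \<longrightarrow> br a b = (\<lambda>i j. 0) \<and> br b a = (\<lambda>i j. 0)"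
    using Bd by (rule conjunct2[THEN conjunct2, THEN conjunct2, THEN conjunct2, THEN conjunct1])
  have c6: "\<forall>a b. br a b = (\<lambda>i j. - br b a j i)"
    using Bd by (rule conjunct2[THEN conjunct2, THEN conjunct2, THEN conjunct2, THEN conjunct2, THEN conjunct1])
  have c7: "\<forall>a b c. br a (amul b c) = (\<lambda>i j. omul_right (br a b) c i j + omul_left b (br a c) i j)"
    using Bd by (rule conjunct2[THEN conjunct2, THEN conjunct2, THEN conjunct2, THEN conjunct2, THEN conjunct2])
  note addL = c1[rule_format] and smulL = c2[rule_format] and addR = c3[rule_format]
    and smulR = c4[rule_format] and zB = c5[rule_format] and skew = c6[rule_format] and der = c7[rule_format]
  define D where "D = br (bv T) (bv T)"
  have h1: "D = (\<lambda>i j. omul_right (br (bv T) (bv E1)) (bv T) i j + omul_left (bv E1) D i j)"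
    unfolding D_def using der[of "bv T" "bv E1" "bv T"] by (simp add: bvT_T)
  have h2: "D = (\<lambda>i j. omul_right D (bv E2) i j + omul_left (bv T) (br (bv T) (bv E2)) i j)"
    unfolding D_def using der[of "bv T" "bv T" "bv E2"] by (simp add: bvT_T)
  have z1: "br (bv T) (bv E1) = (\<lambda>i j. 0)" "br (bv T) (bv E2) = (\<lambda>i j. 0)"
    using zB inB by blast+
  have a1: "\<And>j. D E2 j = 0"
  proof -
    fix j
    have "D E2 j = omul_right (br (bv T) (bv E1)) (bv T) E2 j + omul_left (bv E1) D E2 j"
      using fun_cong[OF fun_cong[OF h1, of E2], of j] by simp
    then show "D E2 j = 0" unfolding z1 unfolding omul_left_def omul_right_def amul_def bv_def
      by (simp add: UNIV_pb)
  qed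
  have a2: "\<And>i. D i E1 = 0"
  proof -
    fix i
    have "D i E1 = omul_right D (bv E2) i E1 + omul_left (bv T) (br (bv T) (bv E2)) i E1"
      using fun_cong[OF fun_cong[OF h2, of i], of E1] by simp
    then show "D i E1 = 0" unfolding z1 unfolding omul_left_def omul_right_def amul_def bv_def
      by (simp add: UNIV_pb)
  qed
  have skp: "br a b i j = - br b a j i" for a b i j
  proof -
    have "br a b i j = (\<lambda>i j. - br b a j i) i j" by (rule fun_cong[OF fun_cong[OF skew]])
    then show ?thesis by simp
  qed
  have sk: "\<And>i j. D i j = - D j i" unfolding D_def by (rule skp)
  have D0: "\<And>i j. D i j = 0"
  proof -
    fix i j
    have tt: "D T T = 0" using sk[of T T] negself by blast
    have te: "D T E2 = 0"
    proof -
      have "D T E2 = - D E2 T" by (rule sk)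
      then show "D T E2 = 0" by (simp only: a1 minus_zero)
    qed
    have e1: "\<And>j. D E1 j = 0"
    proof -
      fix j
      have "D E1 j = - D j E1" by (rule sk)
      then show "D E1 j = 0" by (simp only: a2 minus_zero)
    qed
    show "D i j = 0"
      by (cases i; cases j) (simp_all only: tt te e1 a1 a2)
  qed
  have dec: "\<And>a :: 'k alg. a = (\<lambda>p. (if p = T then 0 else a p) + a T * bv T p)"
    unfolding bv_def by auto
  have inBd: "\<And>a :: 'k alg. in_B (\<lambda>p. if p = T then 0 else a p)" unfolding in_B_def by simp
  have L: "\<And>a b. br a b = (\<lambda>i j. a T * br (bv T) b i j)"
  proof -
    fix a b
    have "br a b = br (\<lambda>p. (if p = T then 0 else a p) + a T * bv T p) b" by (rule arg_cong[where f="\<lambda>x. br x b"], rule dec)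
    also have "\<dots> = (\<lambda>i j. a T * br (bv T) b i j)"
      by (simp only: addL smulL zB[OF inBd]) simp
    finally show "br a b = (\<lambda>i j. a T * br (bv T) b i j)" .
  qed
  have R: "\<And>b. br (bv T) b = (\<lambda>i j. b T * D i j)"
  proof -
    fix b
    have "br (bv T) b = br (bv T) (\<lambda>p. (if p = T then 0 else b p) + b T * bv T p)" by (rule arg_cong[where f="\<lambda>x. br (bv T) x"], rule dec)
    also have "\<dots> = (\<lambda>i j. b T * D i j)"
      unfolding D_def by (simp only: addR smulR zB[OF inBd]) simp
    finally show "br (bv T) b = (\<lambda>i j. b T * D i j)" .
  qed
  show "br = (\<lambda>a b i j. 0)"
    proof (intro ext)
    fix a b i j
    show "br a b i j = 0" by (subst L, subst R) (simp add: D0)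
  qed
qed

end
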